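(* Under the hybrid market scheme described in the context (with $\tau,\lambda,A$ such that aggregate emissions equal $A$ under both schemes and $A$ satisfying the feasibility condition in the context), $$\mathrm{GDP}^{\mathrm{mar}}=\mathrm{GDP}^{\mathrm{tax}}+\tfrac12\Big(\tfrac{(\sum_b\mathrm{E}^{\mathrm{mar}}_b)^2}{\varrho}-\sum_b\tfrac{(\mathrm{E}^{\mathrm{mar}}_b)^2}{\varrho_b}\Big),\quad\text{with}\quad\tfrac{(\sum_b\mathrm{E}^{\mathrm{mar}}_b)^2}{\varrho}-\sum_b\tfrac{(\mathrm{E}^{\mathrm{mar}}_b)^2}{\varrho_b}\le0.$$ Moreover the combined wealth of companies and regulator is lower under the market scheme, namely $$\mathcal{W}^{\mathrm{mar}}_{\mathrm{C}}+\mathcal{W}^{\mathrm{mar}}_{\mathrm{R}}=\mathcal{W}^{\mathrm{tax}}_{\mathrm{C}}+\mathcal{W}^{\mathrm{tax}}_{\mathrm{R}}+\tfrac32\Big(\tfrac{(\sum_b\mathrm{E}^{\mathrm{mar}}_b)^2}{\varrho}-\sum_b\tfrac{(\mathrm{E}^{\mathrm{mar}}_b)^2}{\varrho_b}\Big)-\tfrac{(\sum_b\mathrm{E}^{\mathrm{mar}}_b)^2}{\varrho}.$$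
   Context: Companies indexed by $c$ buy certificates directly at the auction; companies indexed by $b$ buy through financial intermediaries. Each company $i$ has $\pi^0_i,\pi^1_i,\gamma_i>0$, raw wealth $\pi^0_iq-\tfrac{\pi^1_i}2q^2$, emissions $e^{-a}q$ at green cost $\tfrac{\gamma_i}2[(1-e^{-a})q]^2$; $\mathrm{E}^{\mathrm{bau}}_i=\pi^0_i/\pi^1_i$, $\varrho_i=1/\pi^1_i+1/\gamma_i$, $\varrho=\sum_i\varrho_i$ (over all companies); standing assumption $\tau\varrho_i<\mathrm{E}^{\mathrm{bau}}_i$, $\lambda\varrho_i<\mathrm{E}^{\mathrm{bau}}_i$. Feasibility: $[\max_b\tfrac{\mathrm{E}^{\mathrm{bau}}_b}{\varrho_b}-2\lambda](\sum_c\varrho_c+\tfrac12\sum_b\varrho_b)+\sum_c\mathrm{E}^{\mathrm{bau}}_c+\tfrac12\sum_b\mathrm{E}^{\mathrm{bau}}_b\le A<\sum_c\mathrm{E}^{\mathrm{bau}}_c+\sum_b[\tfrac{\mathrm{E}^{\mathrm{bau}}_b}2\vee(\mathrm{E}^{\mathrm{bau}}_b-\lambda\varrho_b)]$. Tax: company maximizes wealth minus $\tau e^{-a}q$, optimal wealth $\mathcal{W}^{\mathrm{tax}}_{\mathrm{C},i}$; regulator earns $\tau\times$ aggregate emissions. Market: company facing price $P$ maximizes wealth $-\delta P-\lambda(e^{-a}q-\delta)^+$, demand $\bm{\delta_i}(P)=\mathrm{E}^{\mathrm{bau}}_i-P\varrho_i$, emissions $\mathrm{E}^{\mathrm{mar}}_i$,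 wealth $\mathcal{W}^{\mathrm{mar}}_{\mathrm{C},i}$; $c$ faces spot price $S$, intermediary of $b$ sets $\bm{P_b}(S)=\arg\max_{P\in[S,\lambda]}\bm{\delta_b}(P)(P-S)$ earning $\mathcal{W}^{\mathrm{mar}}_{\mathrm{F},b}=\bm{\delta_b}(\bm{P_b})(\bm{P_b}-S)$; equilibrium $\bm S$ clears $A=\sum_i\bm{\delta_i}(\bm{P_i}(\bm S))$; regulator earns $\lambda\sum_i(\mathrm{E}^{\mathrm{mar}}_i-\bm{\delta_i})^++\bm SA$. Aggregates are sums; $\mathrm{GDP}^{\cdot}=\mathcal{W}^{\cdot}_{\mathrm{C}}+\mathcal{W}^{\cdot}_{\mathrm{F}}+\mathcal{W}^{\cdot}_{\mathrm{R}}$ with $\mathcal{W}^{\mathrm{tax}}_{\mathrm{F}}=0$. *)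

theory Defs
  imports Complex_Main
begin

text \<open>Company parameters are given as functions of the company index:
  p0 i = pi^0_i, p1 i = pi^1_i, g i = gamma_i.\<close>

definition Ebau :: "('i \<Rightarrow> real) \<Rightarrow> ('i \<Rightarrow> real) \<Rightarrow> 'i \<Rightarrow> real" where
  "Ebau p0 p1 i = p0 i / p1 i"

definition rho :: "('i \<Rightarrow> real) \<Rightarrow> ('i \<Rightarrow> real) \<Rightarrow> 'i \<Rightarrow> real" where
  "rho p1 g i = 1 / p1 i + 1 / g i"

definition raw_wealth :: "('i \<Rightarrow> real) \<Rightarrow> ('i \<Rightarrow> real) \<Rightarrow> 'i \<Rightarrow> real \<Rightarrow> real" where
  "raw_wealth p0 p1 i q = p0 i * q - p1 i / 2 * q ^ 2"

definition green_cost :: "('i \<Rightarrow> real) \<Rightarrow> 'i \<Rightarrow> real \<Rightarrow> real \<Rightarrow> real" where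
  "green_cost g i q a = g i / 2 * ((1 - exp (- a)) * q) ^ 2"

definition emis :: "real \<Rightarrow> real \<Rightarrow> real" where
  "emis q a = exp (- a) * q"

definition tax_obj :: "('i \<Rightarrow> real) \<Rightarrow> ('i \<Rightarrow> real) \<Rightarrow> ('i \<Rightarrow> real) \<Rightarrow> real \<Rightarrow> 'i
    \<Rightarrow> real \<Rightarrow> real \<Rightarrow> real" where
  "tax_obj p0 p1 g tau i q a = raw_wealth p0 p1 i q - green_cost g i q a - tau * emis q a"

definition tax_wealth :: "('i \<Rightarrow> real) \<Rightarrow> ('i \<Rightarrow> real) \<Rightarrow> ('i \<Rightarrow> real) \<Rightarrow> real \<Rightarrow> 'i \<Rightarrow> real" where
  "tax_wealth p0 p1 g tau i =
     (SUP qa \<in> {qa :: real \<times> real. 0 \<le> fst qa \<and> 0 \<le> snd qa}. tax_obj p0 p1 g tau i (fst qa) (snd qa))"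

definition tax_emission :: "('i \<Rightarrow> real) \<Rightarrow> ('i \<Rightarrow> real) \<Rightarrow> ('i \<Rightarrow> real) \<Rightarrow> real \<Rightarrow> 'i \<Rightarrow> real" where
  "tax_emission p0 p1 g tau i =
     (THE e. \<exists>q a. 0 \<le> q \<and> 0 \<le> a \<and> tax_obj p0 p1 g tau i q a = tax_wealth p0 p1 g tau i
                  \<and> e = emis q a)"

text \<open>Market scheme: company facing certificate price P buys d \<ge> 0 certificates and
  pays penalty lam per uncovered unit of emission.\<close>
definition mar_obj :: "('i \<Rightarrow> real) \<Rightarrow> ('i \<Rightarrow> real) \<Rightarrow> ('i \<Rightarrow> real) \<Rightarrow> real \<Rightarrow> real \<Rightarrow> 'i
    \<Rightarrow> real \<Rightarrow> real \<Rightarrow> real \<Rightarrow> real" where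
  "mar_obj p0 p1 g lam P i q a d =
     raw_wealth p0 p1 i q - green_cost g i q a - d * P - lam * max 0 (emis q a - d)"

definition mar_wealth :: "('i \<Rightarrow> real) \<Rightarrow> ('i \<Rightarrow> real) \<Rightarrow> ('i \<Rightarrow> real) \<Rightarrow> real \<Rightarrow> real \<Rightarrow> 'i \<Rightarrow> real" where
  "mar_wealth p0 p1 g lam P i =
     (SUP x \<in> {x :: real \<times> real \<times> real. 0 \<le> fst x \<and> 0 \<le> fst (snd x) \<and> 0 \<le> snd (snd x)}.
        mar_obj p0 p1 g lam P i (fst x) (fst (snd x)) (snd (snd x)))"

definition mar_emission :: "('i \<Rightarrow> real) \<Rightarrow> ('i \<Rightarrow> real) \<Rightarrow> ('i \<Rightarrow> real) \<Rightarrow> real \<Rightarrow> real \<Rightarrow> 'i \<Rightarrow> real" where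
  "mar_emission p0 p1 g lam P i =
     (THE e. \<exists>q a d. 0 \<le> q \<and> 0 \<le> a \<and> 0 \<le> d
                  \<and> mar_obj p0 p1 g lam P i q a d = mar_wealth p0 p1 g lam P i \<and> e = emis q a)"

definition demand :: "('i \<Rightarrow> real) \<Rightarrow> ('i \<Rightarrow> real) \<Rightarrow> ('i \<Rightarrow> real) \<Rightarrow> real \<Rightarrow> 'i \<Rightarrow> real" where
  "demand p0 p1 g P i = Ebau p0 p1 i - P * rho p1 g i"

definition interm_price :: "('i \<Rightarrow> real) \<Rightarrow> ('i \<Rightarrow> real) \<Rightarrow> ('i \<Rightarrow> real) \<Rightarrow> real \<Rightarrow> real \<Rightarrow> 'i \<Rightarrow> real" where
  "interm_price p0 p1 g lam S b = (ARG_MAX (\<lambda>P. demand p0 p1 g P b * (P - S)) P. S \<le> P \<and> P \<le> lam)"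

text \<open>Price faced by company i: spot price for direct buyers, intermediary price for i \<in> B.\<close>
definition mprice :: "'i set \<Rightarrow> ('i \<Rightarrow> real) \<Rightarrow> ('i \<Rightarrow> real) \<Rightarrow> ('i \<Rightarrow> real) \<Rightarrow> real \<Rightarrow> real \<Rightarrow> 'i \<Rightarrow> real" where
  "mprice B p0 p1 g lam S i = (if i \<in> B then interm_price p0 p1 g lam S i else S)"

text \<open>Equilibrium spot price (the intermediary problem needs S \<le> lam).\<close>
definition is_equilibrium :: "'i set \<Rightarrow> 'i set \<Rightarrow> ('i \<Rightarrow> real) \<Rightarrow> ('i \<Rightarrow> real) \<Rightarrow> ('i \<Rightarrow> real)
    \<Rightarrow> real \<Rightarrow> real \<Rightarrow> real \<Rightarrow> bool" where
  "is_equilibrium C B p0 p1 g lam A S \<longleftrightarrow>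
     S \<le> lam \<and> A = (\<Sum>i\<in>C \<union> B. demand p0 p1 g (mprice B p0 p1 g lam S i) i)"

definition WC_tax where
  "WC_tax C B p0 p1 g tau = (\<Sum>i\<in>C \<union> B. tax_wealth p0 p1 g tau i)"
definition WR_tax where
  "WR_tax C B p0 p1 g tau = tau * (\<Sum>i\<in>C \<union> B. tax_emission p0 p1 g tau i)"
definition GDP_tax where
  "GDP_tax C B p0 p1 g tau = WC_tax C B p0 p1 g tau + 0 + WR_tax C B p0 p1 g tau"

definition Emar where
  "Emar B p0 p1 g lam S i = mar_emission p0 p1 g lam (mprice B p0 p1 g lam S i) i"

definition WC_mar where
  "WC_mar C B p0 p1 g lam S = (\<Sum>i\<in>C \<union> B. mar_wealth p0 p1 g lam (mprice B p0 p1 g lam S i) i)"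
definition WF_mar where
  "WF_mar B p0 p1 g lam S =
     (\<Sum>b\<in>B. demand p0 p1 g (interm_price p0 p1 g lam S b) b * (interm_price p0 p1 g lam S b - S))"
definition WR_mar where
  "WR_mar C B p0 p1 g lam A S =
     lam * (\<Sum>i\<in>C \<union> B. max 0 (Emar B p0 p1 g lam S i - demand p0 p1 g (mprice B p0 p1 g lam S i) i))
     + S * A"
definition GDP_mar where
  "GDP_mar C B p0 p1 g lam A S =
     WC_mar C B p0 p1 g lam S + WF_mar B p0 p1 g lam S + WR_mar C B p0 p1 g lam A S"

end

theory Submission
  imports Defs
begin

lemma tax_obj_eq:
  assumes "0 < Po i" "0 < G i"
  shows "tax_obj Pz Po G tau i q a =
    (Pz i - tau)^2/(2*Po i) + tau^2/(2*G i)
    - Po i/2 * (q - (Pz i - tau)/Po i)^2 - G i/2 * ((1 - exp(-a))*q - tau/G i)^2"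
  using assms unfolding tax_obj_def raw_wealth_def green_cost_def emis_def
  by (simp add: field_simps power2_eq_square)

lemma wealth_form:
  assumes "0 < P1 i" "0 < G i"
  shows "(P0 i - P)^2/(2*P1 i) + P^2/(2*G i) = P0 i^2/(2*P1 i) - P * Ebau P0 P1 i + P^2 * rho P1 G i/2"
  using assms unfolding Ebau_def rho_def by (simp add: field_simps power2_eq_square)

lemma generic_opt:
  fixes f :: "'a \<Rightarrow> real"
  assumes "x0 \<in> X" "f x0 = W" "\<And>x. x \<in> X \<Longrightarrow> f x \<le> W"
  shows "(SUP x\<in>X. f x) = W"
  using assms by (intro cSup_eq_maximum) auto

lemma tax_opt:
  assumes p: "0 < p0 i" "0 < p1 i" "0 < g i" and t: "0 \<le> tau" "tau * rho p1 g i < Ebau p0 p1 i"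
  shows "tax_wealth p0 p1 g tau i = (p0 i - tau)^2/(2*p1 i) + tau^2/(2*g i)"
    and "tax_emission p0 p1 g tau i = Ebau p0 p1 i - tau * rho p1 g i"
    and "\<And>q a. 0 \<le> q \<Longrightarrow> 0 \<le> a \<Longrightarrow> tax_obj p0 p1 g tau i q a \<le> (p0 i - tau)^2/(2*p1 i) + tau^2/(2*g i)"
    and "\<And>q a. 0 \<le> q \<Longrightarrow> 0 \<le> a \<Longrightarrow> tax_obj p0 p1 g tau i q a = (p0 i - tau)^2/(2*p1 i) + tau^2/(2*g i)
           \<Longrightarrow> emis q a = Ebau p0 p1 i - tau * rho p1 g i"
    and "\<exists>q a. 0 \<le> q \<and> 0 \<le> a \<and> tax_obj p0 p1 g tau i q a = (p0 i - tau)^2/(2*p1 i) + tau^2/(2*g i)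
           \<and> emis q a = Ebau p0 p1 i - tau * rho p1 g i"
proof -
  define W where "W = (p0 i - tau)^2/(2*p1 i) + tau^2/(2*g i)"
  define qs where "qs = (p0 i - tau)/p1 i"
  define us where "us = Ebau p0 p1 i - tau * rho p1 g i"
  note te = tax_obj_eq[where Po=p1 and G=g and i=i and Pz=p0 and tau=tau, OF p(2,3)]
  have us_pos: "0 < us" using t unfolding us_def by simp
  have qs_eq: "qs = us + tau/g i" unfolding qs_def us_def Ebau_def rho_def using p
    by (simp add: field_simps)
  have qs_ge: "us \<le> qs" using qs_eq t p by simp
  have qs_pos: "0 < qs" using us_pos qs_ge by simp
  define as where "as = ln (qs/us)"
  have as_ge: "0 \<le> as" unfolding as_def using us_pos qs_ge by simp
  have ex: "exp (-as) = us/qs" unfolding as_def using us_pos qs_pos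
    by (simp add: exp_minus ln_div exp_diff)
  have le: "tax_obj p0 p1 g tau i q a \<le> W" for q a
  proof -
    have "0 \<le> p1 i/2 * (q - (p0 i - tau)/p1 i)^2" "0 \<le> g i/2 * ((1 - exp(-a))*q - tau/g i)^2"
      using p by simp_all
    then show ?thesis unfolding te W_def by linarith
  qed
  have att: "tax_obj p0 p1 g tau i qs as = W"
  proof -
    have "exp(-as)*qs = us" using ex qs_pos by simp
    then have "(1 - exp(-as))*qs = tau/g i" using qs_eq by (simp add: algebra_simps)
    then show ?thesis unfolding te W_def qs_def[symmetric] by simp
  qed
  have uniq: "emis q a = us" if "tax_obj p0 p1 g tau i q a = W" for q a
  proof -
    have h: "p1 i/2 * (q - qs)^2 + g i/2 * ((1 - exp(-a))*q - tau/g i)^2 = 0"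
      using that unfolding te W_def qs_def by simp
    have "p1 i/2 * (q - qs)^2 = 0" "g i/2 * ((1 - exp(-a))*q - tau/g i)^2 = 0"
    proof -
      have "0 \<le> p1 i/2 * (q - qs)^2" "0 \<le> g i/2 * ((1 - exp(-a))*q - tau/g i)^2"
        using p by simp_all
      then show "p1 i/2 * (q - qs)^2 = 0" "g i/2 * ((1 - exp(-a))*q - tau/g i)^2 = 0"
        using h by linarith+
    qed
    then have "q = qs" "(1 - exp(-a))*q = tau/g i" using p by auto
    then show ?thesis unfolding emis_def using qs_eq by (simp add: algebra_simps)
  qed
  have sup: "tax_wealth p0 p1 g tau i = W"
    unfolding tax_wealth_def
    by (rule generic_opt[of "(qs,as)"]) (use qs_pos as_ge att le in auto)
  show "tax_wealth p0 p1 g tau i = (p0 i - tau)^2/(2*p1 i) + tau^2/(2*g i)" using sup W_def by simp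
  show "tax_emission p0 p1 g tau i = Ebau p0 p1 i - tau * rho p1 g i"
    unfolding tax_emission_def sup us_def[symmetric]
  proof (rule the_equality)
    show "\<exists>q a. 0 \<le> q \<and> 0 \<le> a \<and> tax_obj p0 p1 g tau i q a = W \<and> us = emis q a"
      using qs_pos as_ge att ex by (intro exI[of _ qs] exI[of _ as]) (auto simp: emis_def)
  qed (use uniq in auto)
  show "\<And>q a. 0 \<le> q \<Longrightarrow> 0 \<le> a \<Longrightarrow> tax_obj p0 p1 g tau i q a \<le> (p0 i - tau)^2/(2*p1 i) + tau^2/(2*g i)"
    using le W_def by simp
  show "\<And>q a. 0 \<le> q \<Longrightarrow> 0 \<le> a \<Longrightarrow> tax_obj p0 p1 g tau i q a = (p0 i - tau)^2/(2*p1 i) + tau^2/(2*g i)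
           \<Longrightarrow> emis q a = Ebau p0 p1 i - tau * rho p1 g i"
    using uniq W_def us_def by simp
  show "\<exists>q a. 0 \<le> q \<and> 0 \<le> a \<and> tax_obj p0 p1 g tau i q a = (p0 i - tau)^2/(2*p1 i) + tau^2/(2*g i)
           \<and> emis q a = Ebau p0 p1 i - tau * rho p1 g i"
    using qs_pos as_ge att ex W_def us_def qs_pos
    by (intro exI[of _ qs] exI[of _ as]) (auto simp: emis_def)
qed

lemma tax_neg:
  assumes p: "0 < p0 i" "0 < p1 i" "0 < g i" and t: "tau < 0"
  shows "tax_emission p0 p1 g tau i = (p0 i - tau)/p1 i"
proof -
  note te = tax_obj_eq[where Po=p1 and G=g and i=i and Pz=p0 and tau=tau, OF p(2,3)]
  define W where "W = (p0 i - tau)^2/(2*p1 i)"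
  define qs where "qs = (p0 i - tau)/p1 i"
  have qs_pos: "0 < qs" unfolding qs_def using p t by simp
  have te2: "tax_obj p0 p1 g tau i q a = W - p1 i/2 * (q - qs)^2 - g i/2 * ((1 - exp(-a))*q)^2
       + tau * ((1 - exp(-a))*q)" for q a
    unfolding te W_def qs_def using p by (simp add: field_simps power2_eq_square)
  have le: "tax_obj p0 p1 g tau i q a \<le> W" if "0 \<le> q" "0 \<le> a" for q a
  proof -
    have "exp (-a) \<le> 1" using that by simp
    then have "0 \<le> (1 - exp(-a))*q" using that by simp
    then have "tau * ((1 - exp(-a))*q) \<le> 0" using t by (simp add: mult_nonpos_nonneg)
    moreover have "0 \<le> p1 i/2 * (q - qs)^2" "0 \<le> g i/2 * ((1 - exp(-a))*q)^2" using p by simp_all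
    ultimately show ?thesis unfolding te2 by linarith
  qed
  have att: "tax_obj p0 p1 g tau i qs 0 = W" unfolding te2 by simp
  have uniq: "emis q a = qs" if "0 \<le> q" "0 \<le> a" "tax_obj p0 p1 g tau i q a = W" for q a
  proof -
    have "exp (-a) \<le> 1" using that by simp
    then have v: "0 \<le> (1 - exp(-a))*q" using that by simp
    then have "tau * ((1 - exp(-a))*q) \<le> 0" using t by (simp add: mult_nonpos_nonneg)
    moreover have "0 \<le> p1 i/2 * (q - qs)^2" "0 \<le> g i/2 * ((1 - exp(-a))*q)^2" using p by simp_all
    ultimately have "p1 i/2 * (q - qs)^2 = 0" "tau * ((1 - exp(-a))*q) = 0"
      using that(3) unfolding te2 by linarith+
    then have "q = qs" "(1 - exp(-a))*q = 0" using p t by auto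
    then show ?thesis unfolding emis_def by (simp add: algebra_simps)
  qed
  have sup: "tax_wealth p0 p1 g tau i = W"
    unfolding tax_wealth_def
    by (rule generic_opt[of "(qs,0)"]) (use qs_pos att le in auto)
  show ?thesis
    unfolding tax_emission_def sup qs_def[symmetric]
  proof (rule the_equality)
    show "\<exists>q a. 0 \<le> q \<and> 0 \<le> a \<and> tax_obj p0 p1 g tau i q a = W \<and> qs = emis q a"
      using qs_pos att by (intro exI[of _ qs] exI[of _ 0]) (auto simp: emis_def)
  qed (use uniq in auto)
qed

lemma mar_opt:
  assumes p: "0 < p0 i" "0 < p1 i" "0 < g i" and t: "0 \<le> P" "P \<le> lam" "P * rho p1 g i < Ebau p0 p1 i"
  shows "mar_wealth p0 p1 g lam P i = (p0 i - P)^2/(2*p1 i) + P^2/(2*g i)"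
    and "mar_emission p0 p1 g lam P i = Ebau p0 p1 i - P * rho p1 g i"
proof -
  define W where "W = (p0 i - P)^2/(2*p1 i) + P^2/(2*g i)"
  define e where "e = Ebau p0 p1 i - P * rho p1 g i"
  note T = tax_opt[OF p t(1) t(3), folded W_def e_def]
  have le1: "mar_obj p0 p1 g lam P i q a d \<le> tax_obj p0 p1 g P i q a" if "0 \<le> q" "0 \<le> d" for q a d
  proof -
    have u: "0 \<le> emis q a" unfolding emis_def using that by simp
    have "P * emis q a - d * P - lam * max 0 (emis q a - d) \<le> 0"
    proof (cases "d \<le> emis q a")
      case True
      then have "P * emis q a - d * P - lam * max 0 (emis q a - d) = (P - lam) * (emis q a - d)"
        by (simp add: algebra_simps)
      also have "\<dots> \<le> 0" using True t by (simp add: mult_nonpos_nonneg)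
      finally show ?thesis .
    next
      case False
      then have "P * emis q a - d * P - lam * max 0 (emis q a - d) = P * (emis q a - d)"
        by (simp add: algebra_simps)
      also have "\<dots> \<le> 0" using False t by (simp add: mult_nonneg_nonpos)
      finally show ?thesis .
    qed
    then show ?thesis unfolding mar_obj_def tax_obj_def by simp
  qed
  have le: "mar_obj p0 p1 g lam P i q a d \<le> W" if "0 \<le> q" "0 \<le> a" "0 \<le> d" for q a d
    using le1[where q=q and a=a and d=d, OF that(1,3)] T(3)[OF that(1,2)] by linarith
  obtain qs as where qa: "0 \<le> qs" "0 \<le> as" "tax_obj p0 p1 g P i qs as = W" "emis qs as = e"
    using T(5) by blast
  have e0: "0 \<le> e" unfolding e_def using t by simp
  have att: "mar_obj p0 p1 g lam P i qs as e = W"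
    using qa unfolding mar_obj_def tax_obj_def by (simp add: algebra_simps)
  have uniq: "emis q a = e" if "0 \<le> q" "0 \<le> a" "0 \<le> d" "mar_obj p0 p1 g lam P i q a d = W" for q a d
  proof -
    have "tax_obj p0 p1 g P i q a = W"
      using le1[where q=q and a=a and d=d, OF that(1,3)] T(3)[OF that(1,2)] that(4) by linarith
    then show ?thesis using T(4)[OF that(1,2)] by simp
  qed
  have sup: "mar_wealth p0 p1 g lam P i = W"
    unfolding mar_wealth_def
    by (rule generic_opt[of "(qs,as,e)"]) (use qa e0 att le in auto)
  show "mar_wealth p0 p1 g lam P i = (p0 i - P)^2/(2*p1 i) + P^2/(2*g i)" using sup W_def by simp
  show "mar_emission p0 p1 g lam P i = Ebau p0 p1 i - P * rho p1 g i"
    unfolding mar_emission_def sup e_def[symmetric]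
  proof (rule the_equality)
    show "\<exists>q a d. 0 \<le> q \<and> 0 \<le> a \<and> 0 \<le> d \<and> mar_obj p0 p1 g lam P i q a d = W \<and> e = emis q a"
      using qa e0 att by (intro exI[of _ qs] exI[of _ as] exI[of _ e]) auto
  qed (use uniq in auto)
qed

lemma interm:
  assumes r: "0 < rho p1 g b" and S: "S \<le> lam" and l: "lam < Ebau p0 p1 b / rho p1 g b"
  shows "interm_price p0 p1 g lam S b = min lam ((Ebau p0 p1 b / rho p1 g b + S)/2)"
proof -
  define M where "M = Ebau p0 p1 b / rho p1 g b"
  define r where "r = rho p1 g b"
  define Pv where "Pv = (M + S)/2"
  define Pm where "Pm = min lam Pv"
  define f where "f = (\<lambda>P. demand p0 p1 g P b * (P - S))"
  have Eb: "Ebau p0 p1 b = M * r" unfolding M_def r_def using r by simp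
  have f_eq: "f P = r * (Pv - S)^2 - r * (P - Pv)^2" for P
    unfolding f_def demand_def Eb Pv_def r_def[symmetric] by (simp add: field_simps power2_eq_square)
  have Pm_in: "S \<le> Pm \<and> Pm \<le> lam" unfolding Pm_def Pv_def using S l M_def by auto
  have best: "f y \<le> f Pm" if "S \<le> y \<and> y \<le> lam" for y
  proof -
    have "(Pm - Pv)^2 \<le> (y - Pv)^2"
    proof (cases "Pv \<le> lam")
      case True then show ?thesis unfolding Pm_def by simp
    next
      case False
      then have "Pm = lam" "y - Pv \<le> lam - Pv" "lam - Pv < 0" using that unfolding Pm_def by auto
      then have "0 \<le> (y - lam) * (y + lam - 2*Pv)" using that by (intro mult_nonpos_nonpos) auto
      moreover have "(y - Pv)^2 - (Pm - Pv)^2 = (y - lam) * (y + lam - 2*Pv)"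
        using \<open>Pm = lam\<close> by (simp add: power2_eq_square algebra_simps)
      ultimately show ?thesis by linarith
    qed
    then show ?thesis unfolding f_eq using r r_def by (simp add: mult_left_mono)
  qed
  have uniq: "y = Pm" if "S \<le> y \<and> y \<le> lam" "f Pm \<le> f y" for y
  proof -
    have "(y - Pv)^2 \<le> (Pm - Pv)^2" using that(2) unfolding f_eq using r r_def by simp
    show ?thesis
    proof (cases "Pv \<le> lam")
      case True then show ?thesis using \<open>(y - Pv)^2 \<le> (Pm - Pv)^2\<close> unfolding Pm_def by simp
    next
      case False
      then have "Pm = lam" "y - Pv \<le> lam - Pv" "lam - Pv < 0" using that unfolding Pm_def by auto
      moreover have "(y - Pv)^2 - (Pm - Pv)^2 = (y - lam) * (y + lam - 2*Pv)"
        using \<open>Pm = lam\<close> by (simp add: power2_eq_square algebra_simps)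
      ultimately have le0: "(y - lam) * (y + lam - 2*Pv) \<le> 0"
        using \<open>(y - Pv)^2 \<le> (Pm - Pv)^2\<close> by linarith
      have "\<not> y < lam"
      proof
        assume "y < lam"
        then have "0 < (y - lam) * (y + lam - 2*Pv)" using \<open>lam - Pv < 0\<close>
          by (intro mult_neg_neg) auto
        then show False using le0 by linarith
      qed
      then show ?thesis using that(1) \<open>Pm = lam\<close> by linarith
    qed
  qed
  have "interm_price p0 p1 g lam S b = Pm"
    unfolding interm_price_def f_def[symmetric]
  proof (rule arg_maxI[where x=Pm])
    show "S \<le> Pm \<and> Pm \<le> lam" by (rule Pm_in)
    show "\<not> f Pm < f y" if "S \<le> y \<and> y \<le> lam" for y using best[OF that] by simp
    show "x = Pm" if "S \<le> x \<and> x \<le> lam" "\<forall>y. S \<le> y \<and> y \<le> lam \<longrightarrow> \<not> f x < f y" for x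
      using uniq[OF that(1)] that(2) Pm_in by force
  qed
  then show ?thesis unfolding Pm_def Pv_def M_def .
qed

theorem corollaryB2:
  fixes C B :: "'i set" and p0 p1 g :: "'i \<Rightarrow> real" and tau lam A S :: real
  assumes finC: "finite C" and finB: "finite B" and disj: "C \<inter> B = {}"
    and neC: "C \<noteq> {}" and neB: "B \<noteq> {}"
    and pos: "\<forall>i\<in>C \<union> B. 0 < p0 i \<and> 0 < p1 i \<and> 0 < g i"
    and stand_tau: "\<forall>i\<in>C \<union> B. tau * rho p1 g i < Ebau p0 p1 i"
    and stand_lam: "\<forall>i\<in>C \<union> B. lam * rho p1 g i < Ebau p0 p1 i"
    and feas_lo: "(Max ((\<lambda>b. Ebau p0 p1 b / rho p1 g b) ` B) - 2 * lam)
                    * ((\<Sum>c\<in>C. rho p1 g c) + (\<Sum>b\<in>B. rho p1 g b) / 2)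
                  + (\<Sum>c\<in>C. Ebau p0 p1 c) + (\<Sum>b\<in>B. Ebau p0 p1 b) / 2 \<le> A"
    and feas_hi: "A < (\<Sum>c\<in>C. Ebau p0 p1 c)
                    + (\<Sum>b\<in>B. max (Ebau p0 p1 b / 2) (Ebau p0 p1 b - lam * rho p1 g b))"
    and eq: "is_equilibrium C B p0 p1 g lam A S"
    and tax_agg: "(\<Sum>i\<in>C \<union> B. tax_emission p0 p1 g tau i) = A"
    and mar_agg: "(\<Sum>i\<in>C \<union> B. Emar B p0 p1 g lam S i) = A"
  shows "let r = (\<Sum>i\<in>C \<union> B. rho p1 g i);
             X = (\<Sum>b\<in>B. Emar B p0 p1 g lam S b) ^ 2 / r
                 - (\<Sum>b\<in>B. (Emar B p0 p1 g lam S b) ^ 2 / rho p1 g b)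
         in GDP_mar C B p0 p1 g lam A S = GDP_tax C B p0 p1 g tau + X / 2
            \<and> X \<le> 0
            \<and> WC_mar C B p0 p1 g lam S + WR_mar C B p0 p1 g lam A S
              = WC_tax C B p0 p1 g tau + WR_tax C B p0 p1 g tau + 3 / 2 * X
                - (\<Sum>b\<in>B. Emar B p0 p1 g lam S b) ^ 2 / r"
proof -
  let ?E = "Ebau p0 p1" and ?r = "rho p1 g" and ?M = "\<lambda>b. Ebau p0 p1 b / rho p1 g b"
  let ?Pr = "mprice B p0 p1 g lam S"
  have finU: "finite (C \<union> B)" using finC finB by simp
  note U = sum.union_disjoint[OF finC finB disj]
  have Epos: "0 < ?E i" and rpos: "0 < ?r i" if "i \<in> C \<union> B" for i
    using pos that unfolding Ebau_def rho_def by (auto intro!: add_pos_pos)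
  have Mlam: "lam < ?M b" if "b \<in> B" for b
    using stand_lam that rpos[of b] by (simp add: field_simps)
  have Slam: "S \<le> lam" using eq unfolding is_equilibrium_def by simp
  have Aeq: "A = (\<Sum>i\<in>C \<union> B. demand p0 p1 g (?Pr i) i)" using eq unfolding is_equilibrium_def by simp
  have AU: "A = (\<Sum>i\<in>C. demand p0 p1 g (?Pr i) i) + (\<Sum>i\<in>B. demand p0 p1 g (?Pr i) i)"
    using Aeq U by simp
  have PrC: "?Pr c = S" if "c \<in> C" for c using that disj unfolding mprice_def by auto
  have PrB0: "?Pr b = min lam ((?M b + S)/2)" if "b \<in> B" for b
    using that interm[OF rpos Slam Mlam[OF that]] unfolding mprice_def by auto
  have AC: "(\<Sum>c\<in>C. demand p0 p1 g (?Pr c) c) = (\<Sum>c\<in>C. ?E c - S * ?r c)"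
    by (rule sum.cong) (auto simp: PrC demand_def)
  define Mx where "Mx = Max (?M ` B)"
  have MxB: "?M b \<le> Mx" if "b \<in> B" for b unfolding Mx_def using finB that by simp
  have inter: "S \<le> 2*lam - ?M b" if "b \<in> B" for b
  proof (rule ccontr)
    assume "\<not> S \<le> 2*lam - ?M b"
    then have SM: "2*lam - Mx < S" using MxB[OF that] by linarith
    have db: "demand p0 p1 g (?Pr b') b' \<le> (?E b' - (2*lam - Mx) * ?r b')/2" if "b' \<in> B" for b'
    proof -
      have m: "(?M b' + 2*lam - Mx)/2 \<le> min lam ((?M b' + S)/2)" using MxB[OF that] SM by auto
      have "(?E b' - (2*lam - Mx) * ?r b')/2 = ?E b' - (?M b' + 2*lam - Mx)/2 * ?r b'"
        using rpos[of b'] that by (simp add: field_simps)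
      also have "\<dots> \<ge> ?E b' - min lam ((?M b' + S)/2) * ?r b'"
        using mult_right_mono[OF m, of "?r b'"] rpos[of b'] that by simp
      finally show ?thesis unfolding demand_def PrB0[OF that] by simp
    qed
    have dc: "(\<Sum>c\<in>C. ?E c - S * ?r c) < (\<Sum>c\<in>C. ?E c - (2*lam - Mx) * ?r c)"
      using finC neC SM rpos by (intro sum_strict_mono) auto
    have "A < (\<Sum>c\<in>C. ?E c - (2*lam - Mx) * ?r c) + (\<Sum>b\<in>B. (?E b - (2*lam - Mx) * ?r b)/2)"
    proof -
      have "(\<Sum>b\<in>B. demand p0 p1 g (?Pr b) b) \<le> (\<Sum>b\<in>B. (?E b - (2*lam - Mx) * ?r b)/2)"
        by (rule sum_mono) (rule db)
      then show ?thesis using AU AC dc by linarith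
    qed
    also have "\<dots> = (Mx - 2 * lam) * ((\<Sum>c\<in>C. ?r c) + (\<Sum>b\<in>B. ?r b) / 2)
                  + (\<Sum>c\<in>C. ?E c) + (\<Sum>b\<in>B. ?E b) / 2"
    proof -
      have "(\<Sum>c\<in>C. ?E c - (2*lam - Mx) * ?r c) = (\<Sum>c\<in>C. ?E c) - (2*lam - Mx) * (\<Sum>c\<in>C. ?r c)"
        by (simp add: sum_subtractf sum_distrib_left)
      moreover have "(\<Sum>b\<in>B. (?E b - (2*lam - Mx) * ?r b)/2) = ((\<Sum>b\<in>B. ?E b) - (2*lam - Mx) * (\<Sum>b\<in>B. ?r b))/2"
        by (simp add: sum_subtractf sum_distrib_left sum_divide_distrib[symmetric])
      ultimately show ?thesis by (simp add: algebra_simps diff_divide_distrib)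
    qed
    finally show False using feas_lo unfolding Mx_def by simp
  qed
  have PrB: "?Pr b = (?M b + S)/2" if "b \<in> B" for b
    using PrB0[OF that] inter[OF that] by simp
  have demB: "demand p0 p1 g (?Pr b) b = (?E b - S * ?r b)/2" if "b \<in> B" for b
    unfolding demand_def PrB[OF that] using rpos[of b] that by (simp add: field_simps)
  have AB: "(\<Sum>b\<in>B. demand p0 p1 g (?Pr b) b) = (\<Sum>b\<in>B. (?E b - S * ?r b)/2)"
    by (rule sum.cong) (auto simp: demB)
  have A2: "A = (\<Sum>c\<in>C. ?E c - S * ?r c) + (\<Sum>b\<in>B. (?E b - S * ?r b)/2)"
    using AU AC AB by simp
  have S0: "0 \<le> S"
  proof (rule ccontr)
    assume "\<not> 0 \<le> S"
    then have Sn: "S < 0" by simp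
    have "(\<Sum>c\<in>C. ?E c) < (\<Sum>c\<in>C. ?E c - S * ?r c)"
      using finC neC Sn rpos by (intro sum_strict_mono) (auto simp: mult_neg_pos)
    moreover have "(\<Sum>b\<in>B. max (?E b / 2) (?E b - lam * ?r b)) \<le> (\<Sum>b\<in>B. (?E b - S * ?r b)/2)"
    proof (rule sum_mono)
      fix b assume b: "b \<in> B"
      have "S * ?r b < 0" using Sn rpos[of b] b by (simp add: mult_neg_pos)
      then have "?E b / 2 \<le> (?E b - S * ?r b)/2" by simp
      moreover have "?E b - lam * ?r b \<le> (?E b - S * ?r b)/2"
        using inter[OF b] rpos[of b] b by (simp add: field_simps)
      ultimately show "max (?E b / 2) (?E b - lam * ?r b) \<le> (?E b - S * ?r b)/2" by (rule max.boundedI)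
    qed
    ultimately show False using feas_hi A2 by linarith
  qed
  have lam0: "0 \<le> lam" using S0 Slam by simp
  have PrI: "0 \<le> ?Pr i \<and> ?Pr i \<le> lam \<and> ?Pr i * ?r i < ?E i" if "i \<in> C \<union> B" for i
  proof -
    have a: "0 \<le> ?Pr i \<and> ?Pr i \<le> lam"
    proof (cases "i \<in> C")
      case True then show ?thesis using PrC S0 Slam by simp
    next
      case False then have "i \<in> B" using that by simp
      then show ?thesis using PrB[of i] inter[of i] S0 Mlam[of i] by simp
    qed
    then have "?Pr i * ?r i \<le> lam * ?r i" using rpos[OF that] by (simp add: mult_right_mono)
    then show ?thesis using a stand_lam that by force
  qed
  have mw: "mar_wealth p0 p1 g lam (?Pr i) i = p0 i^2/(2*p1 i) - ?Pr i * ?E i + (?Pr i)^2 * ?r i/2"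
    and me: "Emar B p0 p1 g lam S i = ?E i - ?Pr i * ?r i" if "i \<in> C \<union> B" for i
  proof -
    have p: "0 < p0 i" "0 < p1 i" "0 < g i" using pos that by auto
    have pr: "0 \<le> ?Pr i" "?Pr i \<le> lam" "?Pr i * ?r i < ?E i" using PrI[OF that] by auto
    note mo = mar_opt[of p0 i p1 g "?Pr i" lam, OF p pr]
    show "mar_wealth p0 p1 g lam (?Pr i) i = p0 i^2/(2*p1 i) - ?Pr i * ?E i + (?Pr i)^2 * ?r i/2"
      using mo(1) wealth_form[of p1 i g p0 "?Pr i"] p by simp
    show "Emar B p0 p1 g lam S i = ?E i - ?Pr i * ?r i" using mo unfolding Emar_def by simp
  qed
  have tau0: "0 \<le> tau"
  proof (rule ccontr)
    assume "\<not> 0 \<le> tau"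
    then have tn: "tau < 0" by simp
    have "(\<Sum>i\<in>C \<union> B. ?E i) < (\<Sum>i\<in>C \<union> B. tax_emission p0 p1 g tau i)"
    proof (rule sum_strict_mono[OF finU])
      show "C \<union> B \<noteq> {}" using neC by simp
      fix i assume i: "i \<in> C \<union> B"
      have p: "0 < p0 i" "0 < p1 i" "0 < g i" using pos i by auto
      show "?E i < tax_emission p0 p1 g tau i" unfolding tax_neg[of p0 i p1 g tau, OF p tn] Ebau_def
        using p tn by (simp add: divide_strict_right_mono)
    qed
    moreover have "(\<Sum>b\<in>B. max (?E b / 2) (?E b - lam * ?r b)) \<le> (\<Sum>b\<in>B. ?E b)"
    proof (rule sum_mono)
      fix b assume b: "b \<in> B"
      show "max (?E b / 2) (?E b - lam * ?r b) \<le> ?E b" using Epos[of b] rpos[of b] lam0 b by simp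
    qed
    ultimately show False using feas_hi tax_agg U[of "Ebau p0 p1"] by linarith
  qed
  have tw: "tax_wealth p0 p1 g tau i = p0 i^2/(2*p1 i) - tau * ?E i + tau^2 * ?r i/2"
    and tem: "tax_emission p0 p1 g tau i = ?E i - tau * ?r i" if "i \<in> C \<union> B" for i
  proof -
    have p: "0 < p0 i" "0 < p1 i" "0 < g i" using pos that by auto
    have st: "tau * ?r i < ?E i" using stand_tau that by auto
    note to = tax_opt[of p0 i p1 g tau, OF p tau0 st]
    show "tax_wealth p0 p1 g tau i = p0 i^2/(2*p1 i) - tau * ?E i + tau^2 * ?r i/2"
      using to(1) wealth_form[of p1 i g p0 tau] p by simp
    show "tax_emission p0 p1 g tau i = ?E i - tau * ?r i" using to by simp
  qed
  let ?Em = "Emar B p0 p1 g lam S"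
  define Kt where "Kt = (\<Sum>i\<in>C \<union> B. p0 i^2/(2*p1 i))"
  define Et where "Et = (\<Sum>i\<in>C \<union> B. ?E i)"
  define R where "R = (\<Sum>i\<in>C \<union> B. ?r i)"
  define RB where "RB = (\<Sum>i\<in>B. ?r i)"
  define T where "T = (\<Sum>b\<in>B. ?Em b)"
  define Q where "Q = (\<Sum>b\<in>B. (?Em b)^2 / ?r b)"
  have Rpos: "0 < R" unfolding R_def using finU neC rpos by (intro sum_pos) auto
  have RBpos: "0 < RB" unfolding RB_def using finB neB rpos by (intro sum_pos) auto
  have RBR: "RB \<le> R" unfolding R_def RB_def U using rpos
    by (simp add: sum_nonneg less_imp_le)
  have EmB: "?Em b = (?E b - S * ?r b)/2" if "b \<in> B" for b
    using me[of b] PrB[OF that] rpos[of b] that by (simp add: field_simps)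
  have EmC: "?Em c = ?E c - S * ?r c" if "c \<in> C" for c
    using me[of c] PrC[OF that] that by simp
  have Q0: "0 \<le> Q" unfolding Q_def using rpos by (intro sum_nonneg divide_nonneg_pos) auto
  have WF: "WF_mar B p0 p1 g lam S = Q"
    unfolding WF_mar_def Q_def
  proof (rule sum.cong)
    fix b assume b: "b \<in> B"
    have ip: "interm_price p0 p1 g lam S b = (?M b + S)/2" using PrB[OF b] b unfolding mprice_def by simp
    show "demand p0 p1 g (interm_price p0 p1 g lam S b) b * (interm_price p0 p1 g lam S b - S) = (?Em b)^2 / ?r b"
      unfolding ip EmB[OF b] demand_def using rpos[of b] b by (simp add: field_simps power2_eq_square)
  qed simp
  have hsum: "(\<Sum>i\<in>C \<union> B. p0 i^2/(2*p1 i) - S * ?E i + S^2 * ?r i / 2) = Kt - S * Et + S^2 * R / 2"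
    unfolding Kt_def Et_def R_def by (simp add: sum.distrib sum_subtractf sum_distrib_left sum_divide_distrib[symmetric])
  have WCm: "WC_mar C B p0 p1 g lam S = Kt - S * Et + S^2 * R / 2 - 3/2 * Q"
  proof -
    have "WC_mar C B p0 p1 g lam S = (\<Sum>i\<in>C. mar_wealth p0 p1 g lam (?Pr i) i) + (\<Sum>i\<in>B. mar_wealth p0 p1 g lam (?Pr i) i)"
      unfolding WC_mar_def U by simp
    also have "(\<Sum>i\<in>C. mar_wealth p0 p1 g lam (?Pr i) i) = (\<Sum>i\<in>C. p0 i^2/(2*p1 i) - S * ?E i + S^2 * ?r i / 2)"
    proof (rule sum.cong)
      fix i assume i: "i \<in> C"
      show "mar_wealth p0 p1 g lam (?Pr i) i = p0 i^2/(2*p1 i) - S * ?E i + S^2 * ?r i / 2"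
        using mw[of i] PrC[OF i] i by simp
    qed simp
    also have "(\<Sum>i\<in>B. mar_wealth p0 p1 g lam (?Pr i) i) = (\<Sum>i\<in>B. (p0 i^2/(2*p1 i) - S * ?E i + S^2 * ?r i / 2) - 3/2 * ((?Em i)^2 / ?r i))"
    proof (rule sum.cong)
      fix b assume b: "b \<in> B"
      show "mar_wealth p0 p1 g lam (?Pr b) b = (p0 b^2/(2*p1 b) - S * ?E b + S^2 * ?r b / 2) - 3/2 * ((?Em b)^2 / ?r b)"
      proof -
        have m: "mar_wealth p0 p1 g lam (?Pr b) b = p0 b^2/(2*p1 b) - ?Pr b * ?E b + (?Pr b)^2 * ?r b/2"
          using mw[of b] b by simp
        show ?thesis unfolding m unfolding EmB[OF b] PrB[OF b] using b rpos[of b] by (simp add: field_simps power2_eq_square)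
      qed
    qed simp
    also have "\<dots> = (\<Sum>i\<in>B. p0 i^2/(2*p1 i) - S * ?E i + S^2 * ?r i / 2) - 3/2 * Q"
      unfolding Q_def by (simp add: sum_subtractf sum_distrib_left)
    finally show ?thesis using hsum[unfolded U] by linarith
  qed
  have WRm: "WR_mar C B p0 p1 g lam A S = S * A"
  proof -
    have "(\<Sum>i\<in>C \<union> B. max 0 (?Em i - demand p0 p1 g (?Pr i) i)) = 0"
      by (rule sum.neutral) (auto simp: me demand_def)
    then show ?thesis unfolding WR_mar_def by simp
  qed
  have WCt: "WC_tax C B p0 p1 g tau = Kt - tau * Et + tau^2 * R / 2"
  proof -
    have "WC_tax C B p0 p1 g tau = (\<Sum>i\<in>C \<union> B. p0 i^2/(2*p1 i) - tau * ?E i + tau^2 * ?r i / 2)"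
      unfolding WC_tax_def by (rule sum.cong) (auto simp: tw)
    then show ?thesis
      unfolding Kt_def Et_def R_def by (simp add: sum.distrib sum_subtractf sum_distrib_left sum_divide_distrib[symmetric])
  qed
  have WRt: "WR_tax C B p0 p1 g tau = tau * A" unfolding WR_tax_def tax_agg by simp
  have At: "A = Et - tau * R"
  proof -
    have "A = (\<Sum>i\<in>C \<union> B. ?E i - tau * ?r i)" using tax_agg[symmetric] by (simp add: tem)
    then show ?thesis unfolding Et_def R_def by (simp add: sum_subtractf sum_distrib_left)
  qed
  have Am: "A = Et - S * R - T"
  proof -
    have "A = (\<Sum>i\<in>C. ?Em i) + T" using mar_agg U[of "?Em"] unfolding T_def by simp
    also have "(\<Sum>i\<in>C. ?Em i) = (\<Sum>i\<in>C. ?E i - S * ?r i)" by (rule sum.cong) (auto simp: EmC)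
    finally have a1: "A = (\<Sum>i\<in>C. ?E i - S * ?r i) + T" .
    have "(\<Sum>i\<in>B. ?E i - S * ?r i) = (\<Sum>i\<in>B. 2 * ?Em i)" by (rule sum.cong) (auto simp: EmB)
    then have a2: "(\<Sum>i\<in>B. ?E i - S * ?r i) = 2 * T" unfolding T_def by (simp add: sum_distrib_left)
    have "Et - S * R = (\<Sum>i\<in>C \<union> B. ?E i - S * ?r i)" unfolding Et_def R_def by (simp add: sum_subtractf sum_distrib_left)
    also have "\<dots> = (\<Sum>i\<in>C. ?E i - S * ?r i) + (\<Sum>i\<in>B. ?E i - S * ?r i)" by (rule U)
    finally show ?thesis using a1 a2 by linarith
  qed
  have CS: "T^2 \<le> RB * Q"
  proof -
    define c where "c = T / RB"
    have "(\<Sum>b\<in>B. (?Em b - ?r b * c)^2 / ?r b) = (\<Sum>b\<in>B. (?Em b)^2 / ?r b - 2 * c * ?Em b + c^2 * ?r b)"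
    proof (rule sum.cong)
      fix b assume b: "b \<in> B"
      then have rb: "0 < ?r b" using rpos by simp
      show "(?Em b - ?r b * c)^2 / ?r b = (?Em b)^2 / ?r b - 2 * c * ?Em b + c^2 * ?r b"
        using rb by (simp add: field_simps power2_eq_square)
    qed simp
    also have "\<dots> = Q - 2 * c * T + c^2 * RB"
      unfolding Q_def T_def RB_def by (simp add: sum.distrib sum_subtractf sum_distrib_left)
    also have "\<dots> = Q - T^2 / RB" unfolding c_def using RBpos by (simp add: field_simps power2_eq_square)
    finally have "0 \<le> Q - T^2 / RB" using rpos by (metis (no_types, lifting) sum_nonneg divide_nonneg_pos
        zero_le_power2 Un_iff)
    then show ?thesis using RBpos by (simp add: field_simps)
  qed
  have X0: "T^2 / R - Q \<le> 0"
  proof -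
    have "T^2 \<le> R * Q" using CS RBR Q0 by (meson mult_right_mono order_trans)
    then show ?thesis using Rpos by (simp add: field_simps)
  qed
  have tauR: "tau = S + T / R" using At Am Rpos by (simp add: field_simps) 
  have EtA: "Et = A + S * R + T" using Am by simp
  have G1: "GDP_mar C B p0 p1 g lam A S = GDP_tax C B p0 p1 g tau + (T^2 / R - Q) / 2"
    unfolding GDP_mar_def GDP_tax_def WF WCm WRm WCt WRt unfolding tauR EtA using Rpos
    by (simp add: field_simps power2_eq_square)
  have G3: "WC_mar C B p0 p1 g lam S + WR_mar C B p0 p1 g lam A S
              = WC_tax C B p0 p1 g tau + WR_tax C B p0 p1 g tau + 3 / 2 * (T^2 / R - Q) - T^2 / R"
    unfolding WCm WRm WCt WRt unfolding tauR EtA using Rpos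
    by (simp add: field_simps power2_eq_square)
  show ?thesis unfolding Let_def R_def[symmetric] T_def[symmetric] Q_def[symmetric]
    using G1 G3 X0 by simp
qed

end
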